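(* Let $F:(M_1,g_1)\to(M_2,g_2)$ be a Riemannian submersion with $\dim M_1=n$, $\dim M_2=m$ and fibre dimension $r=\dim\mathcal V_p>2$. Let $p\in M_1$ and let $\Pi\subset\mathcal V_p$ be any $2$-plane. Choose an orthonormal basis $\{V_1,\dots,V_r\}$ of $\mathcal V_p$ with $\Pi=\mathrm{span}\{V_1,V_2\}$, and an orthonormal basis $\{h_1,\dots,h_s\}$ of $\mathcal H_p$. Then $$\tau^{\ker F_*}_{\mathcal V}(p)-K^{\ker F_*}_{\mathcal V}(\Pi)\;\ge\;\tau^{M_1}_{\mathcal V}(p)-K^{M_1}_{\mathcal V}(\Pi)-\frac{r^2(r-2)}{2(r-1)}\|H\|^2 .$$ Moreover, equality holds if and only if Condition (E) holds at $p$ for $\Pi$.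
   Context: Let $(M_1,g_1)$, $(M_2,g_2)$ be Riemannian manifolds, $\dim M_1=n$, $\dim M_2=m$, and $F:M_1\to M_2$ a Riemannian submersion (a surjective smooth map whose differential $F_{*p}$ is surjective at every $p$ and preserves the length of horizontal vectors). Write $\mathcal V=\ker F_*$ (vertical distribution), $\mathcal H=(\ker F_* )^\perp$ (horizontal distribution), $r=\dim\mathcal V_p=n-m$, $s=\dim\mathcal H_p=m$; $v,h$ denote the orthogonal projections onto $\mathcal V,\mathcal H$, and $\nabla$ the Levi-Civita connection of $g_1$. O'Neill's tensor: $\mathcal T_EF=h\nabla_{vE}vF+v\nabla_{vE}hF$. Curvature convention: $R^{M_1}(X,Y,Z,W)=g_1(R^{M_1}(X,Y)Z,W)$, normalized so that $R^{M_1}(X,Y,Y,X)$ is the sectional curvature of the plane spanned by orthonormal $X,Y$. The curvature $R^{\ker F_*}$ of the fibres is related to $R^{M_1}$ (as used in the paper) by: for vertical $F_1,\dots,F_4$, $R^{M_1}(F_1,F_2,F_3,F_4)=R^{\ker F_*}(F_1,F_2,F_3,F_4)+g_1(\mathcal T_{F_1}F_4,\mathcal T_{F_2}F_3)-g_1(\mathcal T_{F_2}F_4,\mathcal T_{F_1}F_3)$. With the chosen orthonormal bases at $p$: $(\mathcal T^{\mathcal H})^\ell_{ij}=g_1(\mathcal T_{V_i}V_j,h_\ell)$; the mean curvature vector of the fibres is $H=\frac1r\sum_{i=1}^r\mathcal T_{V_i}V_i$; $\tau^{\ker F_*}_{\mathcal V}(p)=\frac12\sum_{i,j=1}^rR^{\ker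 F_*}(V_i,V_j,V_j,V_i)$, $\tau^{M_1}_{\mathcal V}(p)=\frac12\sum_{i,j=1}^rR^{M_1}(V_i,V_j,V_j,V_i)$, $K^{\ker F_*}_{\mathcal V}(\Pi)=R^{\ker F_*}(V_1,V_2,V_2,V_1)$, $K^{M_1}_{\mathcal V}(\Pi)=R^{M_1}(V_1,V_2,V_2,V_1)$ for $\Pi=\mathrm{span}\{V_1,V_2\}$. Condition (E) at $p$ for $\Pi$: there exist orthonormal bases $\{V_1,\dots,V_r\}$ of $\mathcal V_p$ with $\Pi=\mathrm{span}\{V_1,V_2\}$ and $\{h_1,\dots,h_s\}$ of $\mathcal H_p$ with $h_1=H(p)/\|H(p)\|$ if $H(p)\neq0$ ($h_1$ arbitrary if $H(p)=0$), such that: $(\mathcal T^{\mathcal H})^\ell_{1j}=(\mathcal T^{\mathcal H})^\ell_{2j}=0$ for $j>2$, $\ell=1,\dots,s$; $(\mathcal T^{\mathcal H})^1_{ij}=0$ for $i\ne j$, $i,j>2$; $(\mathcal T^{\mathcal H})^\ell_{ij}=0$ for $i,j>2$, $\ell=2,\dots,s$; $(\mathcal T^{\mathcal H})^\ell_{11}+(\mathcal T^{\mathcal H})^\ell_{22}=0$ for $\ell=2,\dots,s$; and $(\mathcal T^{\mathcal H})^1_{11}+(\mathcal T^{\mathcal H})^1_{22}=(\mathcal T^{\mathcal H})^1_{33}=\cdots=(\mathcal T^{\mathcal H})^1_{rr}$. *)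

theory Defs
  imports "HOL-Analysis.Analysis"
begin

text \<open>Pointwise model at a fixed point p: the tangent space T_p M1 is a Euclidean
space 'a, the vertical space V_p = ker F_* is a subspace, the horizontal space is its
orthogonal complement. Orthonormal bases are indexed by 1..k.\<close>

definition orthonormal_basis_of :: "'a::euclidean_space set \<Rightarrow> nat \<Rightarrow> (nat \<Rightarrow> 'a) \<Rightarrow> bool" where
  "orthonormal_basis_of S k e \<longleftrightarrow>
     (\<forall>i\<in>{1..k}. e i \<in> S) \<and>
     (\<forall>i\<in>{1..k}. \<forall>j\<in>{1..k}. inner (e i) (e j) = (if i = j then 1 else 0)) \<and>
     span (e ` {1..k}) = S"

definition horizontal_space :: "'a::euclidean_space set \<Rightarrow> 'a set" where
  "horizontal_space Vp = {x. \<forall>v\<in>Vp. inner v x = 0}"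

definition algebraic_curvature_tensor :: "('a::euclidean_space \<Rightarrow> 'a \<Rightarrow> 'a \<Rightarrow> 'a \<Rightarrow> real) \<Rightarrow> bool" where
  "algebraic_curvature_tensor R \<longleftrightarrow>
     (\<forall>y z w. linear (\<lambda>x. R x y z w)) \<and> (\<forall>x z w. linear (\<lambda>y. R x y z w)) \<and>
     (\<forall>x y w. linear (\<lambda>z. R x y z w)) \<and> (\<forall>x y z. linear (\<lambda>w. R x y z w)) \<and>
     (\<forall>x y z w. R x y z w = - R y x z w) \<and>
     (\<forall>x y z w. R x y z w = - R x y w z) \<and>
     (\<forall>x y z w. R x y z w = R z w x y) \<and>
     (\<forall>x y z w. R x y z w + R y z x w + R z x y w = 0)"

definition tau_V :: "('a \<Rightarrow> 'a \<Rightarrow> 'a \<Rightarrow> 'a \<Rightarrow> real) \<Rightarrow> (nat \<Rightarrow> 'a) \<Rightarrow> nat \<Rightarrow> real" where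
  "tau_V R V r = (1/2) * (\<Sum>i\<in>{1..r}. \<Sum>j\<in>{1..r}. R (V i) (V j) (V j) (V i))"

definition K_V :: "('a \<Rightarrow> 'a \<Rightarrow> 'a \<Rightarrow> 'a \<Rightarrow> real) \<Rightarrow> (nat \<Rightarrow> 'a) \<Rightarrow> real" where
  "K_V R V = R (V 1) (V 2) (V 2) (V 1)"

definition mean_curv :: "('a::euclidean_space \<Rightarrow> 'a \<Rightarrow> 'a) \<Rightarrow> (nat \<Rightarrow> 'a) \<Rightarrow> nat \<Rightarrow> 'a" where
  "mean_curv T V r = (1 / real r) *\<^sub>R (\<Sum>i\<in>{1..r}. T (V i) (V i))"

definition Tcoef :: "('a::euclidean_space \<Rightarrow> 'a \<Rightarrow> 'a) \<Rightarrow> (nat \<Rightarrow> 'a) \<Rightarrow> (nat \<Rightarrow> 'a) \<Rightarrow> nat \<Rightarrow> nat \<Rightarrow> nat \<Rightarrow> real" where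
  "Tcoef T V h l i j = inner (T (V i) (V j)) (h l)"

definition condition_E :: "'a::euclidean_space set \<Rightarrow> nat \<Rightarrow> nat \<Rightarrow> ('a \<Rightarrow> 'a \<Rightarrow> 'a) \<Rightarrow> 'a set \<Rightarrow> bool" where
  "condition_E Vp r s T Pln \<longleftrightarrow>
    (\<exists>V h. orthonormal_basis_of Vp r V \<and> orthonormal_basis_of (horizontal_space Vp) s h \<and>
       span {V 1, V 2} = Pln \<and>
       (mean_curv T V r \<noteq> 0 \<longrightarrow> h 1 = (1 / norm (mean_curv T V r)) *\<^sub>R mean_curv T V r) \<and>
       (\<forall>l\<in>{1..s}. \<forall>j\<in>{3..r}. Tcoef T V h l 1 j = 0 \<and> Tcoef T V h l 2 j = 0) \<and>
       (\<forall>i\<in>{3..r}. \<forall>j\<in>{3..r}. i \<noteq> j \<longrightarrow> Tcoef T V h 1 i j = 0) \<and>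
       (\<forall>l\<in>{2..s}. \<forall>i\<in>{3..r}. \<forall>j\<in>{3..r}. Tcoef T V h l i j = 0) \<and>
       (\<forall>l\<in>{2..s}. Tcoef T V h l 1 1 + Tcoef T V h l 2 2 = 0) \<and>
       (\<forall>j\<in>{3..r}. Tcoef T V h 1 1 1 + Tcoef T V h 1 2 2 = Tcoef T V h 1 j j))"

end

theory Submission
  imports Defs
begin


lemma zero_span:
  fixes y :: "'a::euclidean_space"
  assumes "y \<in> span (e ` I)" "\<And>i. i \<in> I \<Longrightarrow> inner y (e i) = 0"
  shows "y = 0"
proof -
  have "orthogonal y y"
    by (rule orthogonal_to_span[OF assms(1)]) (use assms(2) in \<open>auto simp: orthogonal_def\<close>)
  then show ?thesis by (simp add: orthogonal_def)
qed

lemma expand_onb: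
  fixes e :: "nat \<Rightarrow> 'a::euclidean_space"
  assumes on: "\<And>i j. i \<in> {1..r} \<Longrightarrow> j \<in> {1..r} \<Longrightarrow> inner (e i) (e j) = (if i = j then 1 else 0)"
    and x: "x \<in> span (e ` {1..r})"
  shows "x = (\<Sum>a\<in>{1..r}. inner x (e a) *\<^sub>R e a)"
proof -
  let ?y = "x - (\<Sum>a\<in>{1..r}. inner x (e a) *\<^sub>R e a)"
  have "?y \<in> span (e ` {1..r})"
    by (intro span_diff x span_sum span_scale span_base) auto
  moreover have "inner ?y (e i) = 0" if "i \<in> {1..r}" for i
  proof -
    have "inner (\<Sum>a\<in>{1..r}. inner x (e a) *\<^sub>R e a) (e i) = (\<Sum>a\<in>{1..r}. inner x (e a) * (if a = i then 1 else 0))"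
      using that by (intro trans[OF inner_sum_left] sum.cong) (auto simp: on)
    also have "\<dots> = inner x (e i)" using that by (simp add: if_distrib cong: if_cong)
    finally show ?thesis by (simp add: inner_diff_left)
  qed
  ultimately show ?thesis using zero_span[of ?y e "{1..r}"] by auto
qed

lemma parseval_onb:
  fixes e :: "nat \<Rightarrow> 'a::euclidean_space"
  assumes on: "\<And>i j. i \<in> {1..r} \<Longrightarrow> j \<in> {1..r} \<Longrightarrow> inner (e i) (e j) = (if i = j then 1 else 0)"
    and x: "x \<in> span (e ` {1..r})"
  shows "inner x y = (\<Sum>a\<in>{1..r}. inner x (e a) * inner y (e a))"
proof -
  have "inner x y = inner (\<Sum>a\<in>{1..r}. inner x (e a) *\<^sub>R e a) y"
    using expand_onb[OF on x] by simp
  also have "\<dots> = (\<Sum>a\<in>{1..r}. inner x (e a) * inner y (e a))"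
    unfolding inner_sum_left inner_scaleR_left by (simp add: inner_commute)
  finally show ?thesis .
qed

lemma bil_expand:
  fixes e :: "nat \<Rightarrow> 'a::euclidean_space"
  assumes T: "bilinear T"
    and on: "\<And>i j. i \<in> {1..r} \<Longrightarrow> j \<in> {1..r} \<Longrightarrow> inner (e i) (e j) = (if i = j then 1 else 0)"
    and x: "x \<in> span (e ` {1..r})" and y: "y \<in> span (e ` {1..r})"
  shows "T x y = (\<Sum>a\<in>{1..r}. \<Sum>b\<in>{1..r}. (inner x (e a) * inner y (e b)) *\<^sub>R T (e a) (e b))"
proof -
  have "T x y = T (\<Sum>a\<in>{1..r}. inner x (e a) *\<^sub>R e a) (\<Sum>b\<in>{1..r}. inner y (e b) *\<^sub>R e b)"
    using expand_onb[OF on x] expand_onb[OF on y] by simp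
  also have "\<dots> = (\<Sum>(a,b)\<in>{1..r}\<times>{1..r}. (inner x (e a) * inner y (e b)) *\<^sub>R T (e a) (e b))"
    by (simp add: bilinear_sum[OF T] bilinear_lmul[OF T] bilinear_rmul[OF T] mult.commute)
  also have "\<dots> = (\<Sum>a\<in>{1..r}. \<Sum>b\<in>{1..r}. (inner x (e a) * inner y (e b)) *\<^sub>R T (e a) (e b))"
    by (simp add: sum.cartesian_product)
  finally show ?thesis .
qed



lemma dev_identity:
  fixes x :: "nat \<Rightarrow> 'a::real_inner"
  assumes fin: "finite I" and n: "card I > 0"
  defines "\<mu> \<equiv> (1 / real (card I)) *\<^sub>R (\<Sum>m\<in>I. x m)"
  shows "(\<Sum>m\<in>I. (norm (x m))\<^sup>2) - (norm (\<Sum>m\<in>I. x m))\<^sup>2 / real (card I) = (\<Sum>m\<in>I. (norm (x m - \<mu>))\<^sup>2)"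
proof -
  let ?S = "\<Sum>m\<in>I. x m" and ?n = "real (card I)"
  have "(\<Sum>m\<in>I. (norm (x m - \<mu>))\<^sup>2) = (\<Sum>m\<in>I. (norm (x m))\<^sup>2 - 2 * inner (x m) \<mu> + (norm \<mu>)\<^sup>2)"
    by (simp add: power2_norm_eq_inner inner_diff_left inner_diff_right inner_commute algebra_simps)
  also have "\<dots> = (\<Sum>m\<in>I. (norm (x m))\<^sup>2) - 2 * inner ?S \<mu> + ?n * (norm \<mu>)\<^sup>2"
    by (simp add: sum.distrib sum_subtractf inner_sum_left sum_distrib_left)
  also have "inner ?S \<mu> = (norm ?S)\<^sup>2 / ?n"
    by (simp add: \<mu>_def power2_norm_eq_inner)
  also have "?n * (norm \<mu>)\<^sup>2 = (norm ?S)\<^sup>2 / ?n"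
    using n by (simp add: \<mu>_def power2_eq_square field_simps)
  finally show ?thesis by simp
qed



lemma phi_lemma:
  fixes A :: "nat \<Rightarrow> nat \<Rightarrow> 'a::real_inner"
  assumes r: "r \<ge> 3" and sym: "\<And>i j. i\<in>{1..r} \<Longrightarrow> j\<in>{1..r} \<Longrightarrow> A i j = A j i"
  defines "\<Phi> \<equiv> (1/2) * (\<Sum>i\<in>{1..r}. \<Sum>j\<in>{1..r}. (norm (A i j))\<^sup>2) + inner (A 1 1) (A 2 2)
     - (norm (A 1 2))\<^sup>2 - (norm (\<Sum>i\<in>{1..r}. A i i))\<^sup>2 / (2*(real r - 1))"
  shows "\<Phi> \<ge> 0 \<and> (\<Phi> = 0 \<longleftrightarrow>
     (\<forall>j\<in>{3..r}. A 1 j = 0 \<and> A 2 j = 0) \<and> (\<forall>i\<in>{3..r}. \<forall>j\<in>{3..r}. i \<noteq> j \<longrightarrow> A i j = 0)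
     \<and> (\<forall>j\<in>{3..r}. A j j = A 1 1 + A 2 2))"
proof -
  have U: "{1..r} = insert 1 (insert 2 {3..r})" using r by auto
  define D where "D = (\<Sum>i\<in>{1..r}. \<Sum>j\<in>{1..r}. if i = j \<or> (i \<le> 2 \<and> j \<le> 2) then 0 else (norm (A i j))\<^sup>2)"
  define B where "B = A 1 1 + A 2 2"
  define x where "x m = (if m = 2 then B else A m m)" for m
  define I where "I = {2..r}"
  have cI: "card I = r - 1" by (simp add: I_def)
  have I3: "I = insert 2 {3..r}" using r by (auto simp: I_def)
  define \<mu> where "\<mu> = (1 / real (card I)) *\<^sub>R (\<Sum>m\<in>I. x m)"
  have sq_split: "(norm (A i j))\<^sup>2 = (if i = j \<or> (i \<le> 2 \<and> j \<le> 2) then 0 else (norm (A i j))\<^sup>2)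
      + (if i = j then (norm (A i i))\<^sup>2 else 0) + (if i \<noteq> j \<and> i \<le> 2 \<and> j \<le> 2 then (norm (A i j))\<^sup>2 else 0)" for i j
    by auto
  have s1: "(\<Sum>i\<in>{1..r}. \<Sum>j\<in>{1..r}. if i = j then (norm (A i i))\<^sup>2 else 0) = (\<Sum>i\<in>{1..r}. (norm (A i i))\<^sup>2)"
    by simp
  have s2: "(\<Sum>i\<in>{1..r}. \<Sum>j\<in>{1..r}. if i \<noteq> j \<and> i \<le> 2 \<and> j \<le> 2 then (norm (A i j))\<^sup>2 else 0) = 2 * (norm (A 1 2))\<^sup>2"
  proof -
    have z: "(\<Sum>j\<in>{3..r}. if i \<noteq> j \<and> i \<le> 2 \<and> j \<le> (2::nat) then (norm (A i j))\<^sup>2 else 0) = 0" for i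
      by (intro sum.neutral) auto
    have z2: "(\<Sum>i\<in>{3..r}. \<Sum>j\<in>{1..r}. if i \<noteq> j \<and> i \<le> 2 \<and> j \<le> (2::nat) then (norm (A i j))\<^sup>2 else 0) = 0"
      by (intro sum.neutral ballI) auto
    have "A 2 1 = A 1 2" using sym[of 2 1] r by auto
    then show ?thesis using z z2
      by (subst U, subst U) (simp add: sum.insert)
  qed
  have E1: "(\<Sum>i\<in>{1..r}. \<Sum>j\<in>{1..r}. (norm (A i j))\<^sup>2) = D + (\<Sum>i\<in>{1..r}. (norm (A i i))\<^sup>2) + 2 * (norm (A 1 2))\<^sup>2"
    unfolding D_def s1[symmetric] s2[symmetric]
    by (subst sq_split) (simp add: sum.distrib)
  have E2: "(\<Sum>i\<in>{1..r}. (norm (A i i))\<^sup>2) = (norm (A 1 1))\<^sup>2 + (norm (A 2 2))\<^sup>2 + (\<Sum>k\<in>{3..r}. (norm (A k k))\<^sup>2)"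
    by (subst U) simp
  have E3: "(\<Sum>i\<in>{1..r}. A i i) = (\<Sum>m\<in>I. x m)"
  proof -
    have "(\<Sum>k\<in>{3..r}. x k) = (\<Sum>k\<in>{3..r}. A k k)" by (intro sum.cong) (auto simp: x_def)
    then show ?thesis by (subst U, subst I3) (simp add: x_def B_def)
  qed
  have E4: "(\<Sum>m\<in>I. (norm (x m))\<^sup>2) = (norm B)\<^sup>2 + (\<Sum>k\<in>{3..r}. (norm (A k k))\<^sup>2)"
  proof -
    have "(\<Sum>k\<in>{3..r}. (norm (x k))\<^sup>2) = (\<Sum>k\<in>{3..r}. (norm (A k k))\<^sup>2)" by (intro sum.cong) (auto simp: x_def)
    then show ?thesis by (subst I3) (simp add: x_def)
  qed
  have nB: "(norm B)\<^sup>2 = (norm (A 1 1))\<^sup>2 + (norm (A 2 2))\<^sup>2 + 2 * inner (A 1 1) (A 2 2)"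
    by (simp add: B_def power2_norm_eq_inner inner_add_left inner_add_right inner_commute)
  have dev: "(\<Sum>m\<in>I. (norm (x m))\<^sup>2) - (norm (\<Sum>m\<in>I. x m))\<^sup>2 / real (card I) = (\<Sum>m\<in>I. (norm (x m - \<mu>))\<^sup>2)"
    unfolding \<mu>_def by (rule dev_identity) (use r in \<open>auto simp: I_def\<close>)
  have rc: "real (card I) = real r - 1" using r cI by auto
  have PhiE: "\<Phi> = D / 2 + (\<Sum>m\<in>I. (norm (x m - \<mu>))\<^sup>2) / 2"
  proof -
    have "\<Phi> = D/2 + ((\<Sum>m\<in>I. (norm (x m))\<^sup>2) - (norm (\<Sum>m\<in>I. x m))\<^sup>2 / real (card I)) / 2"
      unfolding \<Phi>_def E1 E2 E3 rc using E4 nB r by (simp add: field_simps)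
    then show ?thesis using dev by simp
  qed
  have Dnn: "D \<ge> 0" unfolding D_def by (intro sum_nonneg) auto
  have Vnn: "(\<Sum>m\<in>I. (norm (x m - \<mu>))\<^sup>2) \<ge> 0" by (intro sum_nonneg) auto
  have D0: "D = 0 \<longleftrightarrow> (\<forall>i\<in>{1..r}. \<forall>j\<in>{1..r}. \<not> (i = j \<or> (i \<le> 2 \<and> j \<le> 2)) \<longrightarrow> A i j = 0)"
    unfolding D_def
    by (subst sum_nonneg_eq_0_iff; auto simp: sum_nonneg_eq_0_iff intro!: sum_nonneg)
  have V0: "(\<Sum>m\<in>I. (norm (x m - \<mu>))\<^sup>2) = 0 \<longleftrightarrow> (\<forall>j\<in>{3..r}. A j j = B)"
  proof
    assume "(\<Sum>m\<in>I. (norm (x m - \<mu>))\<^sup>2) = 0"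
    then have "\<forall>m\<in>I. x m = \<mu>" by (subst (asm) sum_nonneg_eq_0_iff) (auto simp: I_def)
    then have "\<forall>m\<in>I. x m = x 2" using r by (auto simp: I_def)
    then show "\<forall>j\<in>{3..r}. A j j = B"
    proof (intro ballI)
      fix j assume "\<forall>m\<in>I. x m = x 2" "j \<in> {3..r}"
      then have "x j = x 2" unfolding I_def by (meson atLeastAtMost_iff le_trans numeral_le_iff semiring_norm(72) less_imp_le order_refl)
      moreover have "x j = A j j" "x 2 = B" using \<open>j \<in> {3..r}\<close> by (auto simp: x_def)
      ultimately show "A j j = B" by simp
    qed
  next
    assume h: "\<forall>j\<in>{3..r}. A j j = B"
    then have xm: "\<forall>m\<in>I. x m = B" by (auto simp: I_def x_def)
    then have "(\<Sum>m\<in>I. x m) = (\<Sum>m\<in>I. B)" by (intro sum.cong) auto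
    then have "(\<Sum>m\<in>I. x m) = real (card I) *\<^sub>R B" by (simp add: sum_constant_scaleR)
    then have "\<mu> = B" using r cI by (simp add: \<mu>_def)
    then show "(\<Sum>m\<in>I. (norm (x m - \<mu>))\<^sup>2) = 0" using xm by simp
  qed
  have Dcond: "(\<forall>i\<in>{1..r}. \<forall>j\<in>{1..r}. \<not> (i = j \<or> (i \<le> 2 \<and> j \<le> 2)) \<longrightarrow> A i j = 0) \<longleftrightarrow>
     (\<forall>j\<in>{3..r}. A 1 j = 0 \<and> A 2 j = 0) \<and> (\<forall>i\<in>{3..r}. \<forall>j\<in>{3..r}. i \<noteq> j \<longrightarrow> A i j = 0)"
  proof
    assume h: "\<forall>i\<in>{1..r}. \<forall>j\<in>{1..r}. \<not> (i = j \<or> (i \<le> 2 \<and> j \<le> 2)) \<longrightarrow> A i j = 0"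
    then show "(\<forall>j\<in>{3..r}. A 1 j = 0 \<and> A 2 j = 0) \<and> (\<forall>i\<in>{3..r}. \<forall>j\<in>{3..r}. i \<noteq> j \<longrightarrow> A i j = 0)"
      by auto
  next
    assume h: "(\<forall>j\<in>{3..r}. A 1 j = 0 \<and> A 2 j = 0) \<and> (\<forall>i\<in>{3..r}. \<forall>j\<in>{3..r}. i \<noteq> j \<longrightarrow> A i j = 0)"
    show "\<forall>i\<in>{1..r}. \<forall>j\<in>{1..r}. \<not> (i = j \<or> (i \<le> 2 \<and> j \<le> 2)) \<longrightarrow> A i j = 0"
    proof (intro ballI impI)
      fix i j assume ij: "i \<in> {1..r}" "j \<in> {1..r}" "\<not> (i = j \<or> (i \<le> 2 \<and> j \<le> 2))"
      show "A i j = 0"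
      proof (cases "i \<le> 2")
        case True
        then have "i = 1 \<or> i = 2" using ij by auto
        then show ?thesis using h ij by auto
      next
        case False
        show ?thesis
        proof (cases "j \<le> 2")
          case True
          then have "j = 1 \<or> j = 2" using ij by auto
          then have "A j i = 0" using h ij False by auto
          then show ?thesis using sym[OF ij(1,2)] by simp
        next
          case False
          then show ?thesis using h ij \<open>\<not> i \<le> 2\<close> by auto
        qed
      qed
    qed
  qed
  show ?thesis
    using PhiE Dnn Vnn D0 V0 Dcond by (auto simp: B_def)
qed



lemma onb_facts:
  assumes "orthonormal_basis_of Vp r V"
  shows "\<And>i j. i \<in> {1..r} \<Longrightarrow> j \<in> {1..r} \<Longrightarrow> inner (V i) (V j) = (if i = j then 1 else 0)"
    and "\<And>i. i \<in> {1..r} \<Longrightarrow> V i \<in> Vp" and "span (V ` {1..r}) = Vp"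
  using assms by (auto simp: orthonormal_basis_of_def)

lemma expansion_G:
  fixes W :: "nat \<Rightarrow> 'a::euclidean_space"
  assumes T: "bilinear T" and r: "r \<ge> 3"
    and W: "orthonormal_basis_of Vp r W"
    and T_sym: "\<forall>U\<in>Vp. \<forall>Z\<in>Vp. T U Z = T Z U"
    and c1: "\<forall>j\<in>{3..r}. T (W 1) (W j) = 0 \<and> T (W 2) (W j) = 0"
    and c2: "\<forall>i\<in>{3..r}. \<forall>j\<in>{3..r}. i \<noteq> j \<longrightarrow> T (W i) (W j) = 0"
    and c3: "\<forall>j\<in>{3..r}. T (W j) (W j) = T (W 1) (W 1) + T (W 2) (W 2)"
    and x: "x \<in> Vp" and y: "y \<in> Vp"
  shows "T x y = (inner x (W 1) * inner y (W 1)) *\<^sub>R T (W 1) (W 1) + (inner x (W 1) * inner y (W 2)) *\<^sub>R T (W 1) (W 2)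
     + (inner x (W 2) * inner y (W 1)) *\<^sub>R T (W 2) (W 1) + (inner x (W 2) * inner y (W 2)) *\<^sub>R T (W 2) (W 2)
     + (\<Sum>k\<in>{3..r}. inner x (W k) * inner y (W k)) *\<^sub>R (T (W 1) (W 1) + T (W 2) (W 2))"
proof -
  note on = onb_facts[OF W]
  have U: "{1..r} = insert 1 (insert 2 {3..r})" using r by auto
  define c where "c a b = inner x (W a) * inner y (W b)" for a b
  define B where "B = T (W 1) (W 1) + T (W 2) (W 2)"
  have exp: "T x y = (\<Sum>a\<in>{1..r}. \<Sum>b\<in>{1..r}. c a b *\<^sub>R T (W a) (W b))"
    unfolding c_def by (rule bil_expand[OF T on(1)]) (use x y on(3) in auto)
  have row12: "(\<Sum>b\<in>{1..r}. c a b *\<^sub>R T (W a) (W b)) = c a 1 *\<^sub>R T (W a) (W 1) + c a 2 *\<^sub>R T (W a) (W 2)"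
    if "a = 1 \<or> a = 2" for a
  proof -
    have "(\<Sum>b\<in>{3..r}. c a b *\<^sub>R T (W a) (W b)) = 0"
      using that c1 by (intro sum.neutral) auto
    then show ?thesis by (subst U) simp
  qed
  have row3: "(\<Sum>b\<in>{1..r}. c a b *\<^sub>R T (W a) (W b)) = c a a *\<^sub>R B" if a: "a \<in> {3..r}" for a
  proof -
    have "(\<Sum>b\<in>{1..r}. c a b *\<^sub>R T (W a) (W b)) = (\<Sum>b\<in>{1..r}. if b = a then c a a *\<^sub>R B else 0)"
    proof (intro sum.cong refl)
      fix b assume b: "b \<in> {1..r}"
      show "c a b *\<^sub>R T (W a) (W b) = (if b = a then c a a *\<^sub>R B else 0)"
      proof (cases "b \<le> 2")
        case True
        then have "b = 1 \<or> b = 2" using b by auto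
        then have "T (W b) (W a) = 0" using c1 a by auto
        moreover have "T (W a) (W b) = T (W b) (W a)" using T_sym on(2) a b by auto
        ultimately show ?thesis using True a by auto
      next
        case False
        then show ?thesis using c2 c3 a b by (auto simp: B_def)
      qed
    qed
    also have "\<dots> = c a a *\<^sub>R B" using a by simp
    finally show ?thesis .
  qed
  have "T x y = (c 1 1 *\<^sub>R T (W 1) (W 1) + c 1 2 *\<^sub>R T (W 1) (W 2)) + (c 2 1 *\<^sub>R T (W 2) (W 1) + c 2 2 *\<^sub>R T (W 2) (W 2))
       + (\<Sum>a\<in>{3..r}. c a a *\<^sub>R B)"
  proof -
    have "(\<Sum>a\<in>{1..r}. \<Sum>b\<in>{1..r}. c a b *\<^sub>R T (W a) (W b))
       = (\<Sum>a\<in>insert 1 (insert 2 {3..r}). \<Sum>b\<in>{1..r}. c a b *\<^sub>R T (W a) (W b))"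
      using U by simp
    also have "\<dots> = (\<Sum>b\<in>{1..r}. c 1 b *\<^sub>R T (W 1) (W b)) + ((\<Sum>b\<in>{1..r}. c 2 b *\<^sub>R T (W 2) (W b))
        + (\<Sum>a\<in>{3..r}. \<Sum>b\<in>{1..r}. c a b *\<^sub>R T (W a) (W b)))"
      by simp
    also have "(\<Sum>a\<in>{3..r}. \<Sum>b\<in>{1..r}. c a b *\<^sub>R T (W a) (W b)) = (\<Sum>a\<in>{3..r}. c a a *\<^sub>R B)"
      by (intro sum.cong refl row3)
    finally show ?thesis unfolding exp using row12[of 1] row12[of 2] by (simp add: add.assoc)
  qed
  then show ?thesis by (simp add: c_def B_def scaleR_sum_left add.assoc)
qed



lemma transfer_cond:
  fixes W V :: "nat \<Rightarrow> 'a::euclidean_space"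
  assumes T: "bilinear T" and r: "r \<ge> 3"
    and W: "orthonormal_basis_of Vp r W" and V: "orthonormal_basis_of Vp r V"
    and sp: "span {V 1, V 2} = span {W 1, W 2}"
    and T_sym: "\<And>U Z. U \<in> Vp \<Longrightarrow> Z \<in> Vp \<Longrightarrow> T U Z = T Z U"
    and c1: "\<forall>j\<in>{3..r}. T (W 1) (W j) = 0 \<and> T (W 2) (W j) = 0"
    and c2: "\<forall>i\<in>{3..r}. \<forall>j\<in>{3..r}. i \<noteq> j \<longrightarrow> T (W i) (W j) = 0"
    and c3: "\<forall>j\<in>{3..r}. T (W j) (W j) = T (W 1) (W 1) + T (W 2) (W 2)"
  shows "(\<forall>j\<in>{3..r}. T (V 1) (V j) = 0 \<and> T (V 2) (V j) = 0) \<and>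
     (\<forall>i\<in>{3..r}. \<forall>j\<in>{3..r}. i \<noteq> j \<longrightarrow> T (V i) (V j) = 0) \<and>
     (\<forall>j\<in>{3..r}. T (V j) (V j) = T (V 1) (V 1) + T (V 2) (V 2))"
proof -
  note onW = onb_facts[OF W] and onV = onb_facts[OF V]
  have Ts: "\<forall>U\<in>Vp. \<forall>Z\<in>Vp. T U Z = T Z U" using T_sym by blast
  note G = expansion_G[OF T r W Ts c1 c2 c3]
  have r12: "1 \<in> {1..r}" "2 \<in> {1..r}" using r by auto
  have oVW: "inner (V k) (W a) = 0" if k: "k \<in> {3..r}" and a: "a = 1 \<or> a = 2" for k a
  proof -
    have "W a \<in> span {V 1, V 2}" using sp a by (auto intro: span_base)
    moreover have "orthogonal (V k) y" if "y \<in> {V 1, V 2}" for y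
      using that k onV(1)[of k 1] onV(1)[of k 2] by (auto simp: orthogonal_def)
    ultimately show ?thesis using orthogonal_to_span[of "W a" "{V 1, V 2}" "V k"] by (auto simp: orthogonal_def)
  qed
  have oWV: "inner (W k) (V a) = 0" if k: "k \<in> {3..r}" and a: "a = 1 \<or> a = 2" for k a
  proof -
    have "V a \<in> span {W 1, W 2}" using sp[symmetric] a by (auto intro: span_base)
    moreover have "orthogonal (W k) y" if "y \<in> {W 1, W 2}" for y
      using that k onW(1)[of k 1] onW(1)[of k 2] by (auto simp: orthogonal_def)
    ultimately show ?thesis using orthogonal_to_span[of "V a" "{W 1, W 2}" "W k"] by (auto simp: orthogonal_def)
  qed
  have Vin: "V i \<in> Vp" if "i \<in> {1..r}" for i using onV(2) that by auto
  have VinW: "V i \<in> span (W ` {1..r})" if "i \<in> {1..r}" for i using Vin[OF that] onW(3) by simp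
  have WinV: "W i \<in> span (V ` {1..r})" if "i \<in> {1..r}" for i using onW(2)[OF that] onV(3) by simp
  have z3: "(\<Sum>k\<in>{3..r}. inner (V a) (W k) * inner y (W k)) = 0" if "a = 1 \<or> a = 2" for a y
    using that oWV by (intro sum.neutral) (auto simp: inner_commute)
  have part1: "T (V a) (V j) = 0" if a: "a = 1 \<or> a = 2" and j: "j \<in> {3..r}" for a j
  proof -
    have "T (V a) (V j) = (\<Sum>k\<in>{3..r}. inner (V a) (W k) * inner (V j) (W k)) *\<^sub>R (T (W 1) (W 1) + T (W 2) (W 2))"
      using G[OF Vin Vin, of a j] a j r oVW[OF j, of 1] oVW[OF j, of 2] by auto
    then show ?thesis using z3[OF a] by simp
  qed
  have part2: "T (V i) (V j) = (if i = j then 1 else 0) *\<^sub>R (T (W 1) (W 1) + T (W 2) (W 2))"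
    if i: "i \<in> {3..r}" and j: "j \<in> {3..r}" for i j
  proof -
    have "T (V i) (V j) = (\<Sum>k\<in>{3..r}. inner (V i) (W k) * inner (V j) (W k)) *\<^sub>R (T (W 1) (W 1) + T (W 2) (W 2))"
      using G[OF Vin Vin, of i j] i j r oVW[OF j, of 1] oVW[OF j, of 2] oVW[OF i, of 1] oVW[OF i, of 2] by auto
    also have "(\<Sum>k\<in>{3..r}. inner (V i) (W k) * inner (V j) (W k)) = (\<Sum>k\<in>{1..r}. inner (V i) (W k) * inner (V j) (W k))"
    proof -
      have U: "{1..r} = insert 1 (insert 2 {3..r})" using r by auto
      show ?thesis using oVW[OF i] by (subst U) simp
    qed
    also have "\<dots> = inner (V i) (V j)"
      using parseval_onb[OF onW(1) VinW, of i "V j"] i r by auto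
    also have "\<dots> = (if i = j then 1 else 0)" using onV(1) i j by auto
    finally show ?thesis .
  qed
  have p: "inner (V 1) (W a) * inner (V 1) (W b) + inner (V 2) (W a) * inner (V 2) (W b) = (if a = b then 1 else 0)"
    if a: "a = 1 \<or> a = 2" and b: "b = 1 \<or> b = 2" for a b
  proof -
    have U: "{1..r} = insert 1 (insert 2 {3..r})" using r by auto
    have ar: "a \<in> {1..r}" "b \<in> {1..r}" using a b r by auto
    have "(if a = b then 1 else 0) = inner (W a) (W b)" using onW(1) ar by auto
    also have "\<dots> = (\<Sum>i\<in>{1..r}. inner (W a) (V i) * inner (W b) (V i))"
      by (rule parseval_onb[OF onV(1) WinV[OF ar(1)]])
    also have "\<dots> = inner (W a) (V 1) * inner (W b) (V 1) + inner (W a) (V 2) * inner (W b) (V 2)"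
    proof -
      have "(\<Sum>i\<in>{3..r}. inner (W a) (V i) * inner (W b) (V i)) = 0"
        using oVW a by (intro sum.neutral) (auto simp: inner_commute)
      then show ?thesis by (subst U) simp
    qed
    finally show ?thesis by (simp add: inner_commute)
  qed
  have part3: "T (V 1) (V 1) + T (V 2) (V 2) = T (W 1) (W 1) + T (W 2) (W 2)"
  proof -
    have e1: "T (V a) (V a) = (inner (V a) (W 1) * inner (V a) (W 1)) *\<^sub>R T (W 1) (W 1) + (inner (V a) (W 1) * inner (V a) (W 2)) *\<^sub>R T (W 1) (W 2)
     + (inner (V a) (W 2) * inner (V a) (W 1)) *\<^sub>R T (W 2) (W 1) + (inner (V a) (W 2) * inner (V a) (W 2)) *\<^sub>R T (W 2) (W 2)"
      if "a = 1 \<or> a = 2" for a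
      using G[OF Vin Vin, of a a] z3[OF that, of "V a"] that r by auto
    have "T (V 1) (V 1) + T (V 2) (V 2) =
       (inner (V 1) (W 1) * inner (V 1) (W 1) + inner (V 2) (W 1) * inner (V 2) (W 1)) *\<^sub>R T (W 1) (W 1)
     + (inner (V 1) (W 1) * inner (V 1) (W 2) + inner (V 2) (W 1) * inner (V 2) (W 2)) *\<^sub>R T (W 1) (W 2)
     + (inner (V 1) (W 2) * inner (V 1) (W 1) + inner (V 2) (W 2) * inner (V 2) (W 1)) *\<^sub>R T (W 2) (W 1)
     + (inner (V 1) (W 2) * inner (V 1) (W 2) + inner (V 2) (W 2) * inner (V 2) (W 2)) *\<^sub>R T (W 2) (W 2)"
      using e1[of 1] e1[of 2] by (simp add: scaleR_add_left algebra_simps)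
    also have "\<dots> = T (W 1) (W 1) + T (W 2) (W 2)"
      using p[of 1 1] p[of 1 2] p[of 2 1] p[of 2 2] by simp
    finally show ?thesis .
  qed
  show ?thesis using part1 part2 part3 c3 by auto
qed



lemma subspace_hor: "subspace (horizontal_space Vp)"
  unfolding subspace_def horizontal_space_def by (auto simp: inner_add_right)

lemma E_to_cond:
  fixes V :: "nat \<Rightarrow> 'a::euclidean_space"
  assumes T: "bilinear T" and r: "r \<ge> 3"
    and T_hor: "\<And>U W. U \<in> Vp \<Longrightarrow> W \<in> Vp \<Longrightarrow> T U W \<in> horizontal_space Vp"
    and T_sym: "\<And>U Z. U \<in> Vp \<Longrightarrow> Z \<in> Vp \<Longrightarrow> T U Z = T Z U"
    and V: "orthonormal_basis_of Vp r V" and sp: "span {V 1, V 2} = Pln"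
    and E: "condition_E Vp r s T Pln"
  shows "(\<forall>j\<in>{3..r}. T (V 1) (V j) = 0 \<and> T (V 2) (V j) = 0) \<and>
     (\<forall>i\<in>{3..r}. \<forall>j\<in>{3..r}. i \<noteq> j \<longrightarrow> T (V i) (V j) = 0) \<and>
     (\<forall>j\<in>{3..r}. T (V j) (V j) = T (V 1) (V 1) + T (V 2) (V 2))"
proof -
  obtain W h where W: "orthonormal_basis_of Vp r W" and h: "orthonormal_basis_of (horizontal_space Vp) s h"
    and spW: "span {W 1, W 2} = Pln"
    and e1: "\<forall>l\<in>{1..s}. \<forall>j\<in>{3..r}. Tcoef T W h l 1 j = 0 \<and> Tcoef T W h l 2 j = 0"
    and e2: "\<forall>i\<in>{3..r}. \<forall>j\<in>{3..r}. i \<noteq> j \<longrightarrow> Tcoef T W h 1 i j = 0"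
    and e3: "\<forall>l\<in>{2..s}. \<forall>i\<in>{3..r}. \<forall>j\<in>{3..r}. Tcoef T W h l i j = 0"
    and e4: "\<forall>l\<in>{2..s}. Tcoef T W h l 1 1 + Tcoef T W h l 2 2 = 0"
    and e5: "\<forall>j\<in>{3..r}. Tcoef T W h 1 1 1 + Tcoef T W h 1 2 2 = Tcoef T W h 1 j j"
    using E unfolding condition_E_def by blast
  note onW = onb_facts[OF W] and onh = onb_facts[OF h]
  have zero: "x = 0" if "x \<in> horizontal_space Vp" "\<And>l. l \<in> {1..s} \<Longrightarrow> inner x (h l) = 0" for x
    by (rule zero_span[of x h "{1..s}"]) (use that onh(3) in auto)
  have l12: "l = 1 \<or> l \<in> {2..s}" if "l \<in> {1..s}" for l using that by auto
  have Win: "W i \<in> Vp" if "i \<in> {1..r}" for i using onW(2) that by auto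
  have THW: "T (W i) (W j) \<in> horizontal_space Vp" if "i \<in> {1..r}" "j \<in> {1..r}" for i j
    using T_hor Win that by auto
  have r12: "(1::nat) \<in> {1..r}" "(2::nat) \<in> {1..r}" using r by auto
  have c1: "\<forall>j\<in>{3..r}. T (W 1) (W j) = 0 \<and> T (W 2) (W j) = 0"
  proof
    fix j assume j: "j \<in> {3..r}"
    then have jr: "j \<in> {1..r}" by auto
    show "T (W 1) (W j) = 0 \<and> T (W 2) (W j) = 0"
      using zero[OF THW[OF r12(1) jr]] zero[OF THW[OF r12(2) jr]] e1 j by (auto simp: Tcoef_def)
  qed
  have c2: "\<forall>i\<in>{3..r}. \<forall>j\<in>{3..r}. i \<noteq> j \<longrightarrow> T (W i) (W j) = 0"
  proof (intro ballI impI)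
    fix i j assume ij: "i \<in> {3..r}" "j \<in> {3..r}" "i \<noteq> j"
    have "inner (T (W i) (W j)) (h l) = 0" if "l \<in> {1..s}" for l
      using l12[OF that] e2 e3 ij by (auto simp: Tcoef_def)
    then show "T (W i) (W j) = 0" using zero[OF THW] ij by auto
  qed
  have c3: "\<forall>j\<in>{3..r}. T (W j) (W j) = T (W 1) (W 1) + T (W 2) (W 2)"
  proof
    fix j assume j: "j \<in> {3..r}"
    then have jr: "j \<in> {1..r}" by auto
    let ?x = "T (W j) (W j) - (T (W 1) (W 1) + T (W 2) (W 2))"
    have xh: "?x \<in> horizontal_space Vp"
      using THW[OF jr jr] THW[OF r12(1) r12(1)] THW[OF r12(2) r12(2)] subspace_hor
      by (meson subspace_add subspace_diff)
    have "inner ?x (h l) = 0" if "l \<in> {1..s}" for l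
      using l12[OF that] e3 e4 e5 j by (auto simp: Tcoef_def inner_diff_left inner_add_left)
    then show "T (W j) (W j) = T (W 1) (W 1) + T (W 2) (W 2)" using zero[OF xh] by auto
  qed
  show ?thesis
    by (rule transfer_cond[OF T r W V _ T_sym c1 c2 c3]) (use sp spW in auto)
qed



lemma householder_basis:
  fixes u :: "'a::euclidean_space"
  assumes h: "orthonormal_basis_of Hs s h" and Hs: "subspace Hs" and u: "u \<in> Hs" "norm u = 1" and s: "s \<ge> 1"
  shows "\<exists>h'. orthonormal_basis_of Hs s h' \<and> h' 1 = u"
proof -
  note onh = onb_facts[OF h]
  define w where "w = h 1 - u"
  define Q where "Q x = x - (2 * inner x w / inner w w) *\<^sub>R w" for x
  have h1: "h 1 \<in> Hs" "inner (h 1) (h 1) = 1" using onh s by auto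
  have wH: "w \<in> Hs" unfolding w_def using h1 u Hs by (simp add: subspace_diff)
  have lin: "linear Q" unfolding Q_def
    by (intro linearI) (auto simp: inner_add_left algebra_simps add_divide_distrib scaleR_add_left)
  have QQ: "Q (Q x) = x" for x
  proof (cases "w = 0")
    case True then show ?thesis by (simp add: Q_def)
  next
    case False
    then have "inner w w \<noteq> 0" by simp
    then show ?thesis unfolding Q_def
      by (simp add: inner_diff_left algebra_simps field_simps)
  qed
  have Qin: "inner (Q x) (Q y) = inner x y" for x y
  proof (cases "w = 0")
    case True then show ?thesis by (simp add: Q_def)
  next
    case False
    then have "inner w w \<noteq> 0" by simp
    then show ?thesis unfolding Q_def
      by (simp add: inner_diff_left inner_diff_right inner_commute algebra_simps field_simps power2_eq_square)
  qed
  have QH: "Q x \<in> Hs" if "x \<in> Hs" for x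
    unfolding Q_def using that wH Hs by (simp add: subspace_diff subspace_scale)
  have QHs: "Q ` Hs = Hs"
  proof
    show "Q ` Hs \<subseteq> Hs" using QH by auto
    show "Hs \<subseteq> Q ` Hs"
    proof
      fix x assume "x \<in> Hs" then show "x \<in> Q ` Hs" using QQ[of x] QH by (metis image_eqI)
    qed
  qed
  have Q1: "Q (h 1) = u"
  proof (cases "w = 0")
    case True then show ?thesis by (simp add: Q_def w_def)
  next
    case False
    have uu: "inner u u = 1" using u by (simp add: dot_square_norm)
    have ww: "inner w w = 2 * (1 - inner (h 1) u)" unfolding w_def
      using h1 uu by (simp add: inner_diff_left inner_diff_right inner_commute)
    have hw: "inner (h 1) w = 1 - inner (h 1) u" unfolding w_def using h1 by (simp add: inner_diff_right)
    have "inner w w \<noteq> 0" using False by simp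
    moreover have "2 * inner (h 1) w = inner w w" using ww hw by simp
    ultimately have "2 * inner (h 1) w / inner w w = 1" by (metis divide_self)
    then have "Q (h 1) = h 1 - 1 *\<^sub>R w" unfolding Q_def by (simp only:)
    then have "Q (h 1) = h 1 - w" by simp
    then show ?thesis by (simp add: w_def)
  qed
  define h' where "h' i = Q (h i)" for i
  have "orthonormal_basis_of Hs s h'"
    unfolding orthonormal_basis_of_def
  proof (intro conjI ballI)
    fix i assume "i \<in> {1..s}" then show "h' i \<in> Hs" using onh QH by (auto simp: h'_def)
  next
    fix i j assume "i \<in> {1..s}" "j \<in> {1..s}"
    then show "inner (h' i) (h' j) = (if i = j then 1 else 0)" using onh Qin by (simp add: h'_def)
  next
    have "h' ` {1..s} = Q ` (h ` {1..s})" by (auto simp: h'_def)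
    then have "span (h' ` {1..s}) = Q ` span (h ` {1..s})" by (simp add: span_linear_image[OF lin])
    then show "span (h' ` {1..s}) = Hs" using onh(3) QHs by simp
  qed
  then show ?thesis using Q1 by (auto simp: h'_def)
qed



lemma cond_to_E:
  fixes V :: "nat \<Rightarrow> 'a::euclidean_space"
  assumes T: "bilinear T" and r: "r \<ge> 3"
    and T_hor: "\<And>U W. U \<in> Vp \<Longrightarrow> W \<in> Vp \<Longrightarrow> T U W \<in> horizontal_space Vp"
    and V: "orthonormal_basis_of Vp r V" and sp: "span {V 1, V 2} = Pln"
    and h: "orthonormal_basis_of (horizontal_space Vp) s h"
    and c1: "\<forall>j\<in>{3..r}. T (V 1) (V j) = 0 \<and> T (V 2) (V j) = 0"
    and c2: "\<forall>i\<in>{3..r}. \<forall>j\<in>{3..r}. i \<noteq> j \<longrightarrow> T (V i) (V j) = 0"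
    and c3: "\<forall>j\<in>{3..r}. T (V j) (V j) = T (V 1) (V 1) + T (V 2) (V 2)"
  shows "condition_E Vp r s T Pln"
proof -
  note onV = onb_facts[OF V] and onh = onb_facts[OF h]
  define H where "H = mean_curv T V r"
  define B where "B = T (V 1) (V 1) + T (V 2) (V 2)"
  have U: "{1..r} = insert 1 (insert 2 {3..r})" using r by auto
  have S: "(\<Sum>i\<in>{1..r}. T (V i) (V i)) = (real r - 1) *\<^sub>R B"
  proof -
    have "(\<Sum>i\<in>{3..r}. T (V i) (V i)) = (\<Sum>i\<in>{3..r}. B)" using c3 by (auto simp: B_def)
    then have "(\<Sum>i\<in>{3..r}. T (V i) (V i)) = (real r - 2) *\<^sub>R B" using r by (simp add: sum_constant_scaleR of_nat_diff algebra_simps scaleR_2)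
    then have "(\<Sum>i\<in>{1..r}. T (V i) (V i)) = B + (real r - 2) *\<^sub>R B" by (subst U) (simp add: B_def)
    moreover have "B + (real r - 2) *\<^sub>R B = (real r - 1) *\<^sub>R B" by (simp add: algebra_simps scaleR_2)
    ultimately show ?thesis by simp
  qed
  have BH: "B = (real r / (real r - 1)) *\<^sub>R H"
  proof -
    have "H = ((real r - 1) / real r) *\<^sub>R B" unfolding H_def mean_curv_def S by simp
    then have "(real r / (real r - 1)) *\<^sub>R H = ((real r / (real r - 1)) * ((real r - 1) / real r)) *\<^sub>R B"
      by simp
    also have "(real r / (real r - 1)) * ((real r - 1) / real r) = 1" using r by (simp add: field_simps)
    finally show ?thesis by simp
  qed
  have Hhor: "H \<in> horizontal_space Vp"
    unfolding H_def mean_curv_def using subspace_hor T_hor onV(2)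
    by (intro subspace_scale[OF subspace_hor] subspace_sum[OF subspace_hor]) auto
  obtain h' where h': "orthonormal_basis_of (horizontal_space Vp) s h'"
    and h'1: "H \<noteq> 0 \<Longrightarrow> h' 1 = (1 / norm H) *\<^sub>R H"
  proof (cases "H = 0")
    case True then show ?thesis using that h by auto
  next
    case False
    have s1: "s \<ge> 1"
    proof (rule ccontr)
      assume "\<not> s \<ge> 1" then have "s = 0" by simp
      then have "horizontal_space Vp = {0}" using onh(3) by simp
      then show False using Hhor False by simp
    qed
    obtain g where "orthonormal_basis_of (horizontal_space Vp) s g" "g 1 = (1 / norm H) *\<^sub>R H"
      using householder_basis[OF h subspace_hor _ _ s1, of "(1 / norm H) *\<^sub>R H"] False Hhor
      by (auto intro: subspace_scale[OF subspace_hor])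
    then show ?thesis using that by auto
  qed
  note onh' = onb_facts[OF h']
  have Bperp: "inner B (h' l) = 0" if "l \<in> {2..s}" for l
  proof (cases "H = 0")
    case True then show ?thesis using BH by simp
  next
    case False
    have "inner (h' 1) (h' l) = 0" using onh'(1)[of 1 l] that by auto
    then have "inner H (h' l) = 0" using h'1[OF False] False by simp
    then show ?thesis using BH by simp
  qed
  show ?thesis unfolding condition_E_def
  proof (intro exI conjI)
    show "orthonormal_basis_of Vp r V" by (rule V)
    show "orthonormal_basis_of (horizontal_space Vp) s h'" by (rule h')
    show "span {V 1, V 2} = Pln" by (rule sp)
    show "mean_curv T V r \<noteq> 0 \<longrightarrow> h' 1 = (1 / norm (mean_curv T V r)) *\<^sub>R mean_curv T V r"
      using h'1 by (simp add: H_def)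
    show "\<forall>l\<in>{1..s}. \<forall>j\<in>{3..r}. Tcoef T V h' l 1 j = 0 \<and> Tcoef T V h' l 2 j = 0"
      using c1 by (simp add: Tcoef_def)
    show "\<forall>i\<in>{3..r}. \<forall>j\<in>{3..r}. i \<noteq> j \<longrightarrow> Tcoef T V h' 1 i j = 0"
      using c2 by (simp add: Tcoef_def)
    show "\<forall>l\<in>{2..s}. \<forall>i\<in>{3..r}. \<forall>j\<in>{3..r}. Tcoef T V h' l i j = 0"
    proof (intro ballI)
      fix l i j assume "l \<in> {2..s}" "i \<in> {3..r}" "j \<in> {3..r}"
      then show "Tcoef T V h' l i j = 0" using c2 c3 Bperp
        by (cases "i = j") (auto simp: Tcoef_def B_def)
    qed
    show "\<forall>l\<in>{2..s}. Tcoef T V h' l 1 1 + Tcoef T V h' l 2 2 = 0"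
      using Bperp by (simp add: Tcoef_def B_def inner_add_left)
    show "\<forall>j\<in>{3..r}. Tcoef T V h' 1 1 1 + Tcoef T V h' 1 2 2 = Tcoef T V h' 1 j j"
      using c3 by (simp add: Tcoef_def inner_add_left)
  qed
qed

theorem theorem1:
  fixes Vp Pln :: "'a::euclidean_space set"
    and T :: "'a \<Rightarrow> 'a \<Rightarrow> 'a"
    and R1 Rk :: "'a \<Rightarrow> 'a \<Rightarrow> 'a \<Rightarrow> 'a \<Rightarrow> real"
    and V h :: "nat \<Rightarrow> 'a"
    and r s :: nat
  assumes Vp: "subspace Vp"
    and r_def: "r = dim Vp" and r_gt: "r > 2"
    and s_def: "s = dim (horizontal_space Vp)"
    and T_bil: "bilinear T"
    and T_hor: "\<And>U W. U \<in> Vp \<Longrightarrow> W \<in> Vp \<Longrightarrow> T U W \<in> horizontal_space Vp"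
    and T_sym: "\<And>U W. U \<in> Vp \<Longrightarrow> W \<in> Vp \<Longrightarrow> T U W = T W U"
    and R1_curv: "algebraic_curvature_tensor R1"
    and Gauss: "\<And>F1 F2 F3 F4. F1 \<in> Vp \<Longrightarrow> F2 \<in> Vp \<Longrightarrow> F3 \<in> Vp \<Longrightarrow> F4 \<in> Vp \<Longrightarrow>
        R1 F1 F2 F3 F4 = Rk F1 F2 F3 F4 + inner (T F1 F4) (T F2 F3) - inner (T F2 F4) (T F1 F3)"
    and Pln: "subspace Pln" "Pln \<subseteq> Vp" "dim Pln = 2"
    and V: "orthonormal_basis_of Vp r V" "span {V 1, V 2} = Pln"
    and h: "orthonormal_basis_of (horizontal_space Vp) s h"
  shows "tau_V Rk V r - K_V Rk V \<ge>
           tau_V R1 V r - K_V R1 V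
           - (real r ^ 2 * (real r - 2)) / (2 * (real r - 1)) * (norm (mean_curv T V r))\<^sup>2
       \<and> (tau_V Rk V r - K_V Rk V =
           tau_V R1 V r - K_V R1 V
           - (real r ^ 2 * (real r - 2)) / (2 * (real r - 1)) * (norm (mean_curv T V r))\<^sup>2
          \<longleftrightarrow> condition_E Vp r s T Pln)"
proof -
  have r3: "r \<ge> 3" using r_gt by simp
  note onV = onb_facts[OF V(1)]
  define A where "A i j = T (V i) (V j)" for i j
  define S where "S = (\<Sum>i\<in>{1..r}. A i i)"
  define Q where "Q = (\<Sum>i\<in>{1..r}. \<Sum>j\<in>{1..r}. (norm (A i j))\<^sup>2)"
  have Asym: "A i j = A j i" if "i \<in> {1..r}" "j \<in> {1..r}" for i j
    unfolding A_def using T_sym onV(2) that by auto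
  define \<Phi> where "\<Phi> = (1/2) * Q + inner (A 1 1) (A 2 2)
     - (norm (A 1 2))\<^sup>2 - (norm S)\<^sup>2 / (2*(real r - 1))"
  have PL: "\<Phi> \<ge> 0 \<and> (\<Phi> = 0 \<longleftrightarrow>
     (\<forall>j\<in>{3..r}. A 1 j = 0 \<and> A 2 j = 0) \<and> (\<forall>i\<in>{3..r}. \<forall>j\<in>{3..r}. i \<noteq> j \<longrightarrow> A i j = 0)
     \<and> (\<forall>j\<in>{3..r}. A j j = A 1 1 + A 2 2))"
    unfolding \<Phi>_def Q_def S_def by (rule phi_lemma[OF r3 Asym])
  have pt: "Rk (V i) (V j) (V j) (V i) = R1 (V i) (V j) (V j) (V i) - inner (A i i) (A j j) + (norm (A i j))\<^sup>2"
    if "i \<in> {1..r}" "j \<in> {1..r}" for i j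
  proof -
    have "R1 (V i) (V j) (V j) (V i) = Rk (V i) (V j) (V j) (V i) + inner (A i i) (A j j) - inner (A j i) (A i j)"
      unfolding A_def by (rule Gauss) (use onV(2) that in auto)
    moreover have "inner (A j i) (A i j) = (norm (A i j))\<^sup>2" using Asym[OF that] by (simp add: power2_norm_eq_inner)
    ultimately show ?thesis by simp
  qed
  have tauk: "tau_V Rk V r = tau_V R1 V r - (1/2) * (norm S)\<^sup>2 + (1/2) * Q"
  proof -
    have "tau_V Rk V r = (1/2) * (\<Sum>i\<in>{1..r}. \<Sum>j\<in>{1..r}. R1 (V i) (V j) (V j) (V i) - inner (A i i) (A j j) + (norm (A i j))\<^sup>2)"
      unfolding tau_V_def by (simp add: pt)
    also have "\<dots> = tau_V R1 V r - (1/2) * (\<Sum>i\<in>{1..r}. \<Sum>j\<in>{1..r}. inner (A i i) (A j j)) + (1/2) * Q"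
      unfolding tau_V_def Q_def by (simp add: sum.distrib sum_subtractf algebra_simps)
    also have "(\<Sum>i\<in>{1..r}. \<Sum>j\<in>{1..r}. inner (A i i) (A j j)) = (norm S)\<^sup>2"
      unfolding S_def power2_norm_eq_inner by (simp add: inner_sum_left inner_sum_right inner_commute sum.swap[of _ "{1..r}" "{1..r}"])
    finally show ?thesis .
  qed
  have r12: "(1::nat) \<in> {1..r}" "(2::nat) \<in> {1..r}" using r3 by auto
  have Kk: "K_V Rk V = K_V R1 V - inner (A 1 1) (A 2 2) + (norm (A 1 2))\<^sup>2"
    unfolding K_V_def using pt[OF r12] .
  have Hn: "(norm (mean_curv T V r))\<^sup>2 = (norm S)\<^sup>2 / (real r)\<^sup>2"
    unfolding mean_curv_def S_def A_def using r3 by (simp add: power_divide)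
  have cc: "(real r ^ 2 * (real r - 2)) / (2 * (real r - 1)) * ((norm S)\<^sup>2 / (real r)\<^sup>2)
      = (1/2) * (norm S)\<^sup>2 - (norm S)\<^sup>2 / (2*(real r - 1))"
    using r3 by (simp add: field_simps)
  have key: "(tau_V Rk V r - K_V Rk V) - (tau_V R1 V r - K_V R1 V
           - (real r ^ 2 * (real r - 2)) / (2 * (real r - 1)) * (norm (mean_curv T V r))\<^sup>2) = \<Phi>"
    unfolding Hn tauk Kk cc \<Phi>_def by simp
  have condiff: "((\<forall>j\<in>{3..r}. A 1 j = 0 \<and> A 2 j = 0) \<and> (\<forall>i\<in>{3..r}. \<forall>j\<in>{3..r}. i \<noteq> j \<longrightarrow> A i j = 0)
     \<and> (\<forall>j\<in>{3..r}. A j j = A 1 1 + A 2 2)) \<longleftrightarrow> condition_E Vp r s T Pln"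
  proof
    assume c: "(\<forall>j\<in>{3..r}. A 1 j = 0 \<and> A 2 j = 0) \<and> (\<forall>i\<in>{3..r}. \<forall>j\<in>{3..r}. i \<noteq> j \<longrightarrow> A i j = 0)
     \<and> (\<forall>j\<in>{3..r}. A j j = A 1 1 + A 2 2)"
    show "condition_E Vp r s T Pln"
      by (rule cond_to_E[OF T_bil r3 T_hor V(1) V(2) h]) (use c in \<open>auto simp: A_def\<close>)
  next
    assume "condition_E Vp r s T Pln"
    from E_to_cond[OF T_bil r3 T_hor T_sym V(1) V(2) this]
    show "(\<forall>j\<in>{3..r}. A 1 j = 0 \<and> A 2 j = 0) \<and> (\<forall>i\<in>{3..r}. \<forall>j\<in>{3..r}. i \<noteq> j \<longrightarrow> A i j = 0)
     \<and> (\<forall>j\<in>{3..r}. A j j = A 1 1 + A 2 2)" by (simp add: A_def)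
  qed
  show ?thesis using key PL condiff by auto
qed

end
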